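(* Let $k,n\in\mathbb{N}$ and let $Z_{n,k}$ be the Cayley graph of $\mathbb{Z}/n\mathbb{Z}$ with respect to $\{-k,\ldots,k\}$. If $A\subset Z_{n,k}$ satisfies $k\le|A|\le n-k$, then $|\partial^EA|\ge\frac14k^2-1$.
   Context: In the Cayley graph $\mathcal{C}(G,S)$ of a group $G$ with symmetric generating set $S$, vertices are elements of $G$ and $x,y$ are adjacent iff $y=xs$ for some $s\in S\setminus\{1\}$. $\partial^EA$ is the set of edges with exactly one endpoint in $A$. *)

theory Defs
  imports Complex_Main
begin

text \<open>Cayley graph of Z/nZ w.r.t. the symmetric set
  S = {-k,...,k} (taken mod n): x ~ y iff y = x + s (mod n) for some s in S
  with s not the identity (s mod n \<noteq> 0).\<close>

definition cyc_vertices :: "nat \<Rightarrow> int set" where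
  "cyc_vertices n = {0..<int n}"

definition cyc_adj :: "nat \<Rightarrow> nat \<Rightarrow> int \<Rightarrow> int \<Rightarrow> bool" where
  "cyc_adj n k x y \<longleftrightarrow> x \<in> cyc_vertices n \<and> y \<in> cyc_vertices n \<and>
     (\<exists>s\<in>{- int k..int k}. s mod int n \<noteq> 0 \<and> y = (x + s) mod int n)"

definition cyc_edges :: "nat \<Rightarrow> nat \<Rightarrow> int set set" where
  "cyc_edges n k = {{x, y} | x y. cyc_adj n k x y}"

definition edge_boundary :: "nat \<Rightarrow> nat \<Rightarrow> int set \<Rightarrow> int set set" where
  "edge_boundary n k A = {e \<in> cyc_edges n k. card (e \<inter> A) = 1}"

end

theory Submission imports Defs begin

lemma fin_boundary: "finite (edge_boundary n k A)"
proof -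
  have "edge_boundary n k A \<subseteq> Pow (cyc_vertices n)"
    unfolding edge_boundary_def cyc_edges_def cyc_adj_def by auto
  moreover have "finite (cyc_vertices n)" unfolding cyc_vertices_def by simp
  ultimately show ?thesis by (meson finite_Pow_iff finite_subset)
qed

lemma edge_lt:
  fixes u v :: int
  assumes "k < n" "u < v" "v - u \<le> int k" "(u mod int n \<in> A) \<noteq> (v mod int n \<in> A)"
  shows "{u mod int n, v mod int n} \<in> edge_boundary n k A"
proof -
  have n0: "int n > 0" using assms by simp
  define s where "s = v - u"
  have s1: "s \<in> {- int k..int k}" using assms s_def by simp
  have s2: "s mod int n = s" using assms s_def by (simp add: mod_pos_pos_trivial)
  have s3: "s mod int n \<noteq> 0" using s2 assms s_def by simp
  have veq: "v mod int n = (u mod int n + s) mod int n"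
    by (simp add: s_def mod_add_left_eq)
  have adj: "cyc_adj n k (u mod int n) (v mod int n)"
    unfolding cyc_adj_def cyc_vertices_def using n0 s1 s3 veq by (auto intro!: bexI[of _ s])
  hence e: "{u mod int n, v mod int n} \<in> cyc_edges n k" unfolding cyc_edges_def by blast
  have "card ({u mod int n, v mod int n} \<inter> A) = 1"
  proof (cases "u mod int n \<in> A")
    case True
    then have "{u mod int n, v mod int n} \<inter> A = {u mod int n}" using assms(4) by auto
    then show ?thesis by simp
  next
    case False
    then have "{u mod int n, v mod int n} \<inter> A = {v mod int n}" using assms(4) by auto
    then show ?thesis by simp
  qed
  with e show ?thesis unfolding edge_boundary_def by simp
qed

lemma edge_gen:
  fixes u v :: int
  assumes "k < n" "\<bar>u - v\<bar> \<le> int k" "(u mod int n \<in> A) \<noteq> (v mod int n \<in> A)"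
  shows "{u mod int n, v mod int n} \<in> edge_boundary n k A"
proof -
  have "u \<noteq> v" using assms by auto
  then consider "u < v" | "v < u" by linarith
  then show ?thesis
  proof cases
    case 1 then show ?thesis using edge_lt[of k n u v A] assms by simp
  next
    case 2 then show ?thesis using edge_lt[of k n v u A] assms by (simp add: insert_commute)
  qed
qed

lemma mod_inj:
  fixes z :: int and d d' :: nat
  assumes "k < n" "d \<le> k" "d' \<le> k" "(z + int d) mod int n = (z + int d') mod int n"
  shows "d = d'"
proof (rule ccontr)
  assume ne: "d \<noteq> d'"
  have "int n dvd (z + int d) - (z + int d')" using assms(4) by (simp add: mod_eq_dvd_iff)
  hence "int n dvd (int d - int d')" by simp
  moreover have "int d - int d' \<noteq> 0" using ne by simp
  ultimately have "\<bar>int n\<bar> \<le> \<bar>int d - int d'\<bar>" using dvd_imp_le_int by blast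
  thus False using assms by linarith
qed


lemma bound_X:
  fixes X A :: "int set" and c :: nat
  assumes kn: "k < n" and XV: "X \<subseteq> cyc_vertices n" and Xb: "\<forall>x\<in>X. (x \<in> A) = b"
    and cb: "\<forall>x\<in>X. c \<le> card {d\<in>{..k}. ((x + int d) mod int n \<in> A) \<noteq> b}"
  shows "card X * c \<le> card (edge_boundary n k A)"
proof -
  define D where "D x = {d\<in>{..k}. ((x + int d) mod int n \<in> A) \<noteq> b}" for x
  define phi where "phi p = {fst p, (fst p + int (snd p)) mod int n}" for p :: "int \<times> nat"
  have finX: "finite X" using XV finite_subset unfolding cyc_vertices_def by blast
  have xmod: "x mod int n = x" if "x \<in> X" for x
    using XV that unfolding cyc_vertices_def by (auto intro: mod_pos_pos_trivial)
  have img: "phi ` Sigma X D \<subseteq> edge_boundary n k A"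
  proof
    fix e assume "e \<in> phi ` Sigma X D"
    then obtain x d where xd: "x \<in> X" "d \<in> D x" and e: "e = phi (x, d)" by auto
    have "{x mod int n, (x + int d) mod int n} \<in> edge_boundary n k A"
      apply (rule edge_gen) using kn xd Xb xmod unfolding D_def by auto
    thus "e \<in> edge_boundary n k A" using e xmod[OF xd(1)] unfolding phi_def by simp
  qed
  have inj: "inj_on phi (Sigma X D)"
  proof (rule inj_onI)
    fix p q assume p: "p \<in> Sigma X D" and q: "q \<in> Sigma X D" and eq: "phi p = phi q"
    obtain x d where pp: "p = (x, d)" by (cases p)
    obtain x' d' where qq: "q = (x', d')" by (cases q)
    have hx: "x \<in> X" "d \<le> k" "((x + int d) mod int n \<in> A) \<noteq> b"
      using p pp unfolding D_def by auto
    have hx': "x' \<in> X" "d' \<le> k" "((x' + int d') mod int n \<in> A) \<noteq> b"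
      using q qq unfolding D_def by auto
    have e2: "{x, (x + int d) mod int n} = {x', (x' + int d') mod int n}"
      using eq pp qq unfolding phi_def by simp
    have bx: "(x \<in> A) = b" "(x' \<in> A) = b" using Xb hx(1) hx'(1) by auto
    have "x = x'"
    proof (rule ccontr)
      assume "x \<noteq> x'"
      then have "x = (x' + int d') mod int n" using e2 by (metis doubleton_eq_iff)
      thus False using bx hx' by simp
    qed
    moreover have "(x + int d) mod int n = (x' + int d') mod int n"
    proof -
      have "(x + int d) mod int n \<noteq> x" using bx hx by auto
      then show ?thesis using e2 \<open>x = x'\<close> by (metis doubleton_eq_iff)
    qed
    ultimately have "d = d'" using mod_inj[OF kn hx(2) hx'(2)] by simp
    with \<open>x = x'\<close> show "p = q" using pp qq by simp
  qed
  have "card X * c \<le> (\<Sum>x\<in>X. card (D x))"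
    using cb sum_bounded_below[of X c "\<lambda>x. card (D x)"] unfolding D_def by simp
  also have "\<dots> = card (Sigma X D)"
    using finX by (subst card_SigmaI) (auto simp: D_def)
  also have "\<dots> = card (phi ` Sigma X D)" using card_image[OF inj] by simp
  also have "\<dots> \<le> card (edge_boundary n k A)"
    using img fin_boundary by (rule card_mono[rotated])
  finally show ?thesis .
qed

lemma bound_W:
  fixes A :: "int set" and z :: int
  assumes kn: "k < n"
  shows "card {d\<in>{..k}. (z + int d) mod int n \<in> A} * (Suc k - card {d\<in>{..k}. (z + int d) mod int n \<in> A})
         \<le> card (edge_boundary n k A)"
proof -
  define F where "F = {d\<in>{..k}. (z + int d) mod int n \<in> A}"
  define G where "G = {..k} - F"
  have cG: "card G = Suc k - card F" unfolding G_def
    by (subst card_Diff_subset) (auto simp: F_def)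
  define phi where "phi p = {(z + int (fst p)) mod int n, (z + int (snd p)) mod int n}" for p :: "nat \<times> nat"
  have img: "phi ` (F \<times> G) \<subseteq> edge_boundary n k A"
  proof
    fix e assume "e \<in> phi ` (F \<times> G)"
    then obtain d d' where dd: "d \<in> F" "d' \<in> G" and e: "e = phi (d, d')" by auto
    show "e \<in> edge_boundary n k A" unfolding e phi_def
      apply simp apply (rule edge_gen) using kn dd unfolding F_def G_def by auto
  qed
  have inj: "inj_on phi (F \<times> G)"
  proof (rule inj_onI)
    fix p q assume p: "p \<in> F \<times> G" and q: "q \<in> F \<times> G" and eq: "phi p = phi q"
    obtain d e where pp: "p = (d, e)" by (cases p)
    obtain d' e' where qq: "q = (d', e')" by (cases q)
    have h: "d \<le> k" "e \<le> k" "d' \<le> k" "e' \<le> k" "(z + int d) mod int n \<in> A" "(z + int d') mod int n \<in> A"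
       "(z + int e) mod int n \<notin> A" "(z + int e') mod int n \<notin> A"
      using p q pp qq unfolding F_def G_def by auto
    have e2: "{(z + int d) mod int n, (z + int e) mod int n} = {(z + int d') mod int n, (z + int e') mod int n}"
      using eq pp qq unfolding phi_def by simp
    have "(z + int d) mod int n = (z + int d') mod int n" using e2 h by (metis doubleton_eq_iff)
    moreover have "(z + int e) mod int n = (z + int e') mod int n" using e2 h by (metis doubleton_eq_iff)
    ultimately show "p = q" using mod_inj[OF kn] h pp qq by (metis)
  qed
  have "card F * card G = card (F \<times> G)" by (simp add: card_cartesian_product)
  also have "\<dots> = card (phi ` (F \<times> G))" using card_image[OF inj] by simp
  also have "\<dots> \<le> card (edge_boundary n k A)"
    using img fin_boundary by (rule card_mono[rotated])
  finally show ?thesis using cG unfolding F_def by simp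
qed

lemma ivt_aux:
  fixes g :: "int \<Rightarrow> int"
  assumes step: "\<And>i. \<bar>g (i + 1) - g i\<bar> \<le> 1"
  shows "g a \<le> c \<Longrightarrow> c \<le> g (a + int m) \<Longrightarrow> \<exists>z. g z = c"
proof (induction m)
  case 0 then show ?case by auto
next
  case (Suc m)
  show ?case
  proof (cases "c \<le> g (a + int m)")
    case True then show ?thesis using Suc by blast
  next
    case False
    have "\<bar>g (a + int m + 1) - g (a + int m)\<bar> \<le> 1" by (rule step)
    moreover have "a + int (Suc m) = a + int m + 1" by simp
    ultimately have "g (a + int (Suc m)) = c" using False Suc.prems by (smt (verit))
    then show ?thesis by blast
  qed
qed

lemma ivt:
  fixes g :: "int \<Rightarrow> int"
  assumes step: "\<And>i. \<bar>g (i + 1) - g i\<bar> \<le> 1" and "g x \<le> c" "c \<le> g y"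
  shows "\<exists>z. g z = c"
proof (cases "x \<le> y")
  case True
  then have "y = x + int (nat (y - x))" by simp
  then show ?thesis using ivt_aux[of g x c "nat (y - x)", OF step] assms by metis
next
  case False
  define h where "h i = - g i" for i
  have st: "\<bar>h (i + 1) - h i\<bar> \<le> 1" for i unfolding h_def using step[of i] by simp
  have "x = y + int (nat (x - y))" using False by simp
  then obtain z where "h z = - c" using ivt_aux[of h y "-c" "nat (x - y)", OF st] assms h_def by force
  then show ?thesis unfolding h_def by auto
qed


lemma card_ind: "finite S \<Longrightarrow> card {d\<in>S. Q d} = (\<Sum>d\<in>S. if Q d then 1 else 0 :: nat)"
  using sum.inter_filter[of S "\<lambda>_. 1::nat" Q] by simp

lemma step_f:
  fixes x :: int and A :: "int set"
  shows "\<bar>int (card {d\<in>{..k}. (x + 1 + int d) mod int n \<in> A}) - int (card {d\<in>{..k}. (x + int d) mod int n \<in> A})\<bar> \<le> 1"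
proof -
  define f where "f y = card {d\<in>{..k}. (y + int d) mod int n \<in> A}" for y
  define ind where "ind y = (if y mod int n \<in> A then 1 else 0 :: nat)" for y :: int
  have fs: "f y = (\<Sum>d<Suc k. ind (y + int d))" for y
    unfolding f_def ind_def by (subst card_ind) (auto simp: lessThan_Suc_atMost)
  have a: "f x = ind x + (\<Sum>d<k. ind (x + 1 + int d))"
    unfolding fs by (subst sum.lessThan_Suc_shift) (simp add: ac_simps)
  have b: "f (x + 1) = (\<Sum>d<k. ind (x + 1 + int d)) + ind (x + 1 + int k)"
    unfolding fs by simp
  have "ind x \<le> 1" "ind (x + 1 + int k) \<le> 1" unfolding ind_def by auto
  then have "\<bar>int (f (x + 1)) - int (f x)\<bar> \<le> 1" using a b by linarith
  then show ?thesis unfolding f_def .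
qed


lemma arith1: "k^2 \<le> 4 * (((k::nat)+1) div 2 * (Suc k - (k+1) div 2))"
proof -
  obtain t where "k = 2*t \<or> k = 2*t+1" by (metis dvd_mult_div_cancel odd_two_times_div_two_succ dvd_triv_left)
  then show ?thesis
  proof
    assume k: "k = 2*t"
    have "(k+1) div 2 = t" using k by simp
    then show ?thesis using k by (simp add: power2_eq_square algebra_simps)
  next
    assume k: "k = 2*t+1"
    have "(k+1) div 2 = t+1" using k by simp
    then show ?thesis using k by (simp add: power2_eq_square algebra_simps)
  qed
qed

lemma arith2: "(k::nat)^2 \<le> 4 * (k * ((k+1) div 2 + 1))"
proof -
  have "k \<le> 4 * ((k+1) div 2 + 1)" by presburger
  then have "k * k \<le> k * (4 * ((k+1) div 2 + 1))" by simp
  then show ?thesis by (simp add: power2_eq_square algebra_simps)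
qed

lemma arith3: "(k::nat)^2 \<le> 4 * (k * (Suc k - (k+1) div 2))"
proof -
  have "k \<le> 4 * (Suc k - (k+1) div 2)" by presburger
  then have "k * k \<le> k * (4 * (Suc k - (k+1) div 2))" by simp
  then show ?thesis by (simp add: power2_eq_square algebra_simps)
qed

theorem mainTheorem20:
  fixes n k :: nat and A :: "int set"
  assumes "A \<subseteq> cyc_vertices n"
    and "k \<le> card A" and "int (card A) \<le> int n - int k"
  shows "real (card (edge_boundary n k A)) \<ge> (real k)^2 / 4 - 1"
proof (cases "k = 0")
  case True then show ?thesis by simp
next
  case False
  define E where "E = card (edge_boundary n k A)"
  have finA: "finite A" using assms(1) finite_subset unfolding cyc_vertices_def by blast
  have finV: "finite (cyc_vertices n)" unfolding cyc_vertices_def by simp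
  have cV: "card (cyc_vertices n) = n" unfolding cyc_vertices_def by simp
  have kn: "k < n" using assms(2,3) False by linarith
  define f where "f y = card {d\<in>{..k}. (y + int d) mod int n \<in> A}" for y
  define h where "h = (k+1) div 2"
  have step: "\<bar>int (f (i + 1)) - int (f i)\<bar> \<le> 1" for i
    unfolding f_def using step_f[of k i n A] by simp
  have main: "k^2 \<le> 4 * E"
  proof (cases "\<exists>x. f x \<le> h")
    case True
    then obtain x where x: "f x \<le> h" by blast
    show ?thesis
    proof (cases "\<exists>y. h \<le> f y")
      case True
      then obtain y where y: "h \<le> f y" by blast
      obtain z where "int (f z) = int h"
        using ivt[of "\<lambda>i. int (f i)" x "int h" y] step x y by auto
      then have fz: "f z = h" by simp
      have "h * (Suc k - h) \<le> E" using bound_W[OF kn, of z A] fz unfolding f_def E_def by simp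
      then show ?thesis using arith1[of k] unfolding h_def by linarith
    next
      case False
      then have lt: "f y < h" for y by (meson not_le)
      have "card A * (Suc k - h) \<le> E" unfolding E_def
      proof (rule bound_X[OF kn assms(1), where b = True])
        show "\<forall>x\<in>A. (x \<in> A) = True" by simp
        show "\<forall>x\<in>A. Suc k - h \<le> card {d \<in> {..k}. ((x + int d) mod int n \<in> A) \<noteq> True}"
        proof
          fix x assume "x \<in> A"
          have "{d \<in> {..k}. ((x + int d) mod int n \<in> A) \<noteq> True} = {..k} - {d\<in>{..k}. (x + int d) mod int n \<in> A}"
            by auto
          then have "card {d \<in> {..k}. ((x + int d) mod int n \<in> A) \<noteq> True} = Suc k - f x"
            unfolding f_def by (simp only:) (subst card_Diff_subset, auto)
          then show "Suc k - h \<le> card {d \<in> {..k}. ((x + int d) mod int n \<in> A) \<noteq> True}"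
            using lt[of x] by simp
        qed
      qed
      then have "k * (Suc k - h) \<le> E" using assms(2) by (meson le_trans mult_le_mono1)
      then show ?thesis using arith3[of k] unfolding h_def by linarith
    qed
  next
    case False
    then have gt: "h < f y" for y by (meson not_le)
    have "card (cyc_vertices n - A) * (h + 1) \<le> E" unfolding E_def
    proof (rule bound_X[OF kn, where b = False])
      show "cyc_vertices n - A \<subseteq> cyc_vertices n" by blast
      show "\<forall>x\<in>cyc_vertices n - A. (x \<in> A) = False" by simp
      show "\<forall>x\<in>cyc_vertices n - A. h + 1 \<le> card {d \<in> {..k}. ((x + int d) mod int n \<in> A) \<noteq> False}"
        using gt unfolding f_def by (simp add: Suc_le_eq)
    qed
    moreover have "card (cyc_vertices n - A) = n - card A"
      using card_Diff_subset[OF finA assms(1)] cV by simp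
    moreover have "k \<le> n - card A" using assms(3) by linarith
    ultimately have "k * (h + 1) \<le> E" by (metis le_trans mult_le_mono1)
    then show ?thesis using arith2[of k] unfolding h_def by linarith
  qed
  then have "real (k^2) \<le> 4 * real E" by (metis of_nat_le_iff of_nat_mult of_nat_numeral)
  then show ?thesis unfolding E_def by simp
qed

end
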